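(* Let $n\ge 1$ and let $f\colon \mathbb Z_2^n\to\mathbb Z_2^n$ be any map. For $\vec y\in\mathbb Z_2^n$ let $A_{\vec y}=\{\vec x\in\mathbb Z_2^n : f(\vec x)=\vec y\}$ and let $d=\max_{\vec y\in\mathbb Z_2^n}|A_{\vec y}|$. Then for every integer $q$ with $0\le q<\lceil \log_2 d\rceil$ there is no reversible circuit consisting of NOT, CNOT and 2-CNOT gates on $n+q$ lines that implements $f$ with $q$ additional inputs.
   Context: For $m\ge1$, a $k$-CNOT gate $C^m_{i_1,\dots,i_k;j}$ on $m$ lines (with $j\notin\{i_1,\dots,i_k\}$, indices distinct) is the transformation $\mathbb Z_2^m\to\mathbb Z_2^m$, $\langle x_1,\dots,x_m\rangle\mapsto\langle x_1,\dots,x_j\oplus (x_{i_1}\wedge\dots\wedge x_{i_k}),\dots,x_m\rangle$ (only coordinate $j$ changes). NOT is the case $k=0$ (i.e. $x_j\mapsto x_j\oplus 1$), CNOT is $k=1$, 2-CNOT (Toffoli) is $k=2$. A reversible circuit on $m$ lines is a finite sequence of such gates; it computes the composition $g\colon\mathbb Z_2^m\to\mathbb Z_2^m$ of its gates, and its complexity is the number of gates. Let $\phi_{n,n+q}(\langle x_1,\dots,x_n\rangle)=\langle x_1,\dots,x_n,0,\dots,0\rangle\in\mathbb Z_2^{n+q}$ and $\psi_{n+q,n}(\langle x_1,\dots,x_{n+q}\rangle)=\langle x_1,\dots,x_n\rangle$. A circuit on $n+q$ lines computing $g$ implements $f\colon\mathbb Z_2^n\to\mathbb Z_2^n$ with $q$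 additional inputs if $\psi_{n+q,n}(g(\phi_{n,n+q}(\vec x)))=f(\vec x)$ for all $\vec x\in\mathbb Z_2^n$. *)

theory Defs
  imports Complex_Main
begin

text \<open>Boolean vectors in Z_2^m are represented as bool lists of length m;
  line i of the paper (1-based) is list index i-1 (0-based).
  A gate is given by its list of control lines and its target line.\<close>

datatype gate = Gate "nat list" nat

fun gate_ok :: "nat \<Rightarrow> gate \<Rightarrow> bool" where
  "gate_ok m (Gate cs j) \<longleftrightarrow>
     distinct cs \<and> j \<notin> set cs \<and> j < m \<and> (\<forall>i\<in>set cs. i < m)"

text \<open>k-CNOT with k = length of control list; x_j := x_j xor (AND of controls).
  With no controls this is NOT.\<close>
fun apply_gate :: "gate \<Rightarrow> bool list \<Rightarrow> bool list" where
  "apply_gate (Gate cs j) x = x[j := (x ! j \<noteq> (\<forall>i\<in>set cs. x ! i))]"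

definition run_circuit :: "gate list \<Rightarrow> bool list \<Rightarrow> bool list" where
  "run_circuit c x = fold apply_gate c x"

definition NCT_circuit :: "nat \<Rightarrow> gate list \<Rightarrow> bool" where
  "NCT_circuit m c \<longleftrightarrow>
     (\<forall>g\<in>set c. gate_ok m g \<and> (case g of Gate cs j \<Rightarrow> length cs \<le> 2))"

definition implements_with :: "nat \<Rightarrow> nat \<Rightarrow> gate list \<Rightarrow> (bool list \<Rightarrow> bool list) \<Rightarrow> bool" where
  "implements_with n q c f \<longleftrightarrow>
     (\<forall>x. length x = n \<longrightarrow> take n (run_circuit c (x @ replicate q False)) = f x)"

definition vecs :: "nat \<Rightarrow> bool list set" where
  "vecs n = {x. length x = n}"

definition max_preimage :: "nat \<Rightarrow> (bool list \<Rightarrow> bool list) \<Rightarrow> nat" where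
  "max_preimage n f = Max ((\<lambda>y. card {x \<in> vecs n. f x = y}) ` vecs n)"

end

theory Submission
  imports Defs
begin

lemma apply_gate_invol:
  assumes "j \<notin> set cs"
  shows "apply_gate (Gate cs j) (apply_gate (Gate cs j) x) = x"
proof -
  define P where "P = (\<forall>i\<in>set cs. x ! i)"
  define y where "y = x[j := (x ! j \<noteq> P)]"
  have c: "(\<forall>i\<in>set cs. y ! i) = P"
    unfolding y_def P_def using assms by (metis nth_list_update_neq)
  have a1: "apply_gate (Gate cs j) x = y" by (simp only: apply_gate.simps y_def P_def)
  have "apply_gate (Gate cs j) (apply_gate (Gate cs j) x) = y[j := (y ! j \<noteq> P)]"
    unfolding a1 by (simp only: apply_gate.simps c)
  also have "\<dots> = x"
  proof (cases "j < length x")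
    case True
    then have "y ! j = (x ! j \<noteq> P)" by (simp add: y_def)
    moreover have "((x ! j \<noteq> P) \<noteq> P) = x ! j" by blast
    ultimately show ?thesis using True by (simp add: y_def)
  next
    case False
    then show ?thesis by (simp add: y_def list_update_beyond)
  qed
  finally show ?thesis .
qed

lemma length_apply_gate: "length (apply_gate g x) = length x"
  by (cases g) auto

lemma length_run: "length (run_circuit c x) = length x"
  unfolding run_circuit_def
  by (induction c arbitrary: x) (auto simp: length_apply_gate)

lemma inj_run:
  assumes "\<forall>g\<in>set c. case g of Gate cs j \<Rightarrow> j \<notin> set cs"
  shows "inj (run_circuit c)"
  using assms unfolding run_circuit_def
proof (induction c)
  case Nil
  then show ?case by (simp add: inj_on_def)
next
  case (Cons g c)
  obtain cs j where g: "g = Gate cs j" by (cases g)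
  with Cons have "j \<notin> set cs" by auto
  then have "inj (apply_gate g)" unfolding g
    by (metis apply_gate_invol injI)
  moreover have "inj (fold apply_gate c)" using Cons by auto
  ultimately show ?case using inj_compose[of "fold apply_gate c" "apply_gate g"] by (simp add: comp_def)
qed

lemma finite_vecs: "finite (vecs n)"
proof -
  have "vecs n = {xs. set xs \<subseteq> UNIV \<and> length xs = n}" by (auto simp: vecs_def)
  then show ?thesis using finite_lists_length_eq[of "UNIV::bool set" n] by simp
qed

lemma card_vecs: "card (vecs n) = 2 ^ n"
proof -
  have "vecs n = {xs. set xs \<subseteq> UNIV \<and> length xs = n}" by (auto simp: vecs_def)
  then show ?thesis using card_lists_length_eq[of "UNIV::bool set" n] by simp
qed

theorem mainTheorem1:
  fixes n q :: nat and f :: "bool list \<Rightarrow> bool list"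
  assumes "n \<ge> 1"
    and "\<forall>x. length x = n \<longrightarrow> length (f x) = n"
    and "int q < \<lceil>log 2 (real (max_preimage n f))\<rceil>"
  shows "\<not> (\<exists>c. NCT_circuit (n + q) c \<and> implements_with n q c f)"
proof
  assume "\<exists>c. NCT_circuit (n + q) c \<and> implements_with n q c f"
  then obtain c where nc: "NCT_circuit (n + q) c" and im: "implements_with n q c f" by blast
  have "\<forall>g\<in>set c. case g of Gate cs j \<Rightarrow> j \<notin> set cs"
    using nc unfolding NCT_circuit_def by (metis gate.case gate.exhaust gate_ok.simps)
  then have inj: "inj (run_circuit c)" by (rule inj_run)
  let ?h = "\<lambda>x. drop n (run_circuit c (x @ replicate q False))"
  have bound: "card {x \<in> vecs n. f x = y} \<le> 2 ^ q" for y
  proof -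
    have "inj_on ?h {x \<in> vecs n. f x = y}"
    proof (rule inj_onI)
      fix a b assume a: "a \<in> {x \<in> vecs n. f x = y}" and b: "b \<in> {x \<in> vecs n. f x = y}"
        and e: "?h a = ?h b"
      have "take n (run_circuit c (a @ replicate q False)) = take n (run_circuit c (b @ replicate q False))"
        using a b im unfolding implements_with_def vecs_def by auto
      with e have "run_circuit c (a @ replicate q False) = run_circuit c (b @ replicate q False)"
        by (metis append_take_drop_id)
      with inj have "a @ replicate q False = b @ replicate q False" by (auto dest: injD)
      then show "a = b" by simp
    qed
    moreover have "?h ` {x \<in> vecs n. f x = y} \<subseteq> vecs q"
      by (auto simp: vecs_def length_run)
    ultimately have "card {x \<in> vecs n. f x = y} \<le> card (vecs q)"
      by (metis card_inj_on_le finite_vecs)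
    then show ?thesis by (simp add: card_vecs)
  qed
  have ne: "vecs n \<noteq> {}" unfolding vecs_def by (auto intro: exI[of _ "replicate n False"])
  have d: "max_preimage n f \<le> 2 ^ q"
    unfolding max_preimage_def using finite_vecs ne bound by (subst Max_le_iff) auto
  have "log 2 (real (max_preimage n f)) \<le> real q"
  proof (cases "max_preimage n f = 0")
    case True then show ?thesis by (simp add: log_def)
  next
    case False
    then have "log 2 (real (max_preimage n f)) \<le> log 2 (2 ^ q)"
      using d by (subst log_le_cancel_iff) auto
    then show ?thesis by simp
  qed
  then have "\<lceil>log 2 (real (max_preimage n f))\<rceil> \<le> int q"
    by (simp add: ceiling_le_iff)
  with assms(3) show False by simp
qed

end
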